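(* Let $n\ge 1$, $h=1/n$, and for $0\le i\le n$ let $\tau_i=-2\sin\frac{i\pi}{2n}$ and $\sigma_i=2\big(2+\cos\frac{i\pi}{n}\big)$. Let $\bar A,\bar D\in\mathbb{R}^{(n+1)\times(n+1)}$ be tridiagonal: $\bar A$ has diagonal $(1,2,\dots,2,1)$ and off-diagonal entries $-1$; $\bar D$ has diagonal $(2,4,\dots,4,2)$ and off-diagonal entries $1$. Let $\bar B\in\mathbb{R}^{n\times(n+1)}$ have entries $\bar B_{k,k}=-1$, $\bar B_{k,k+1}=1$ ($1\le k\le n$), other entries zero. Let $\nu_0=\nu_n=\frac1{\sqrt2}$, $\nu_j=1$ for $1\le j\le n-1$. For $0\le j\le n$ let $\bar{\bm s}_j=\nu_j\big(\sin\frac{j\pi}{2n},\sin\frac{3j\pi}{2n},\dots,\sin\frac{(2n-1)j\pi}{2n}\big)^{\mathsf T}\in\mathbb{R}^n$ (so $\bar{\bm s}_0=\bm 0$) and $\tilde{\bm c}_j=\nu_j\big(1,\cos\frac{j\pi}{n},\dots,\cos\frac{(n-1)j\pi}{n},(-1)^j\big)^{\mathsf T}\in\mathbb{R}^{n+1}$. Consider the discrete eigenvalue problem: find $\lambda\in\mathbb{R}$ and $(U,V)\in\mathbb{R}^{n\times(n+1)}\times\mathbb{R}^{(n+1)\times n}$, $(U,V)\ne(0,0)$, with $$U\bar A-\bar BV\bar B=\tfrac{h^2}{6}\lambda\,U\bar D,\qquad -\bar B^{\mathsf T}U\bar B^{\mathsf T}+\bar AV=\tfrac{h^2}{6}\lambda\,\bar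 DV.$$ Then this problem has the following $2n(n+1)$ eigen-solutions, whose eigenvectors $(U,V)$ form a basis of $\mathbb{R}^{n\times(n+1)}\times\mathbb{R}^{(n+1)\times n}$ (a complete eigen-decomposition): (i) $n^2$ eigen-solutions satisfying the discrete divergence-free constraint $\bar B^{\mathsf T}U\bar D+\bar DV\bar B=0$: $$\lambda_{i,j}=\frac{6}{h^2}\Big(\frac{\tau_i^2}{\sigma_i}+\frac{\tau_j^2}{\sigma_j}\Big),\quad U_{i,j}=\tau_j\sigma_i\,\bar{\bm s}_i\tilde{\bm c}_j^{\mathsf T},\quad V_{i,j}=-\tau_i\sigma_j\,\tilde{\bm c}_i\bar{\bm s}_j^{\mathsf T},\qquad 1\le i,j\le n;$$ (ii) $(n+1)^2-1$ (discrete curl-free) eigen-solutions with eigenvalue $0$: $$\lambda=0,\quad U^0_{i,j}=\tau_i\,\bar{\bm s}_i\tilde{\bm c}_j^{\mathsf T},\quad V^0_{i,j}=\tau_j\,\tilde{\bm c}_i\bar{\bm s}_j^{\mathsf T},\qquad 0\le i,j\le n,\ (i,j)\ne(0,0).$$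
   Context: This is the algebraic form of the lowest-order rectangular Nédélec edge-element discretization of the Maxwell eigenvalue problem $\mathrm{curl}\,\mathrm{rot}\,\bm u=\lambda\bm u$ on $[0,1]^2$ with natural boundary conditions $\mathrm{rot}\,\bm u=0$, $\bm u\cdot\bm n=0$, on a uniform $n\times n$ mesh. For column vectors $\bm a,\bm b$, $\bm a\bm b^{\mathsf T}$ denotes the outer product (written $\bm a\otimes\bm b^{\mathsf T}$ in the paper). *)

theory Defs
  imports Complex_Main
begin

text \<open>Matrices are functions nat => nat => real, indexed from 0; dimensions are
  carried explicitly.  Paper index k (1-based) for B corresponds to row k-1 here,
  while the (n+1)-dimensional indices 0..n of A, D, c are kept as 0..n.\<close>

type_synonym mat = "nat \<Rightarrow> nat \<Rightarrow> real"

definition mmul :: "nat \<Rightarrow> mat \<Rightarrow> mat \<Rightarrow> mat" where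
  "mmul k A B = (\<lambda>i j. \<Sum>l<k. A i l * B l j)"

definition mtr :: "mat \<Rightarrow> mat" where
  "mtr A = (\<lambda>i j. A j i)"

definition outer :: "(nat \<Rightarrow> real) \<Rightarrow> (nat \<Rightarrow> real) \<Rightarrow> mat" where
  "outer a b = (\<lambda>i j. a i * b j)"

definition meq :: "nat \<Rightarrow> nat \<Rightarrow> mat \<Rightarrow> mat \<Rightarrow> bool" where
  "meq r c X Y \<longleftrightarrow> (\<forall>i<r. \<forall>j<c. X i j = Y i j)"

definition mnz :: "nat \<Rightarrow> nat \<Rightarrow> mat \<Rightarrow> bool" where
  "mnz r c X \<longleftrightarrow> (\<exists>i<r. \<exists>j<c. X i j \<noteq> 0)"

definition tau :: "nat \<Rightarrow> nat \<Rightarrow> real" where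
  "tau n i = - 2 * sin (real i * pi / (2 * real n))"

definition sigma :: "nat \<Rightarrow> nat \<Rightarrow> real" where
  "sigma n i = 2 * (2 + cos (real i * pi / real n))"

definition nu :: "nat \<Rightarrow> nat \<Rightarrow> real" where
  "nu n j = (if j = 0 \<or> j = n then 1 / sqrt 2 else 1)"

definition Abar :: "nat \<Rightarrow> mat" where
  "Abar n = (\<lambda>k l. if k \<le> n \<and> l \<le> n then
      (if k = l then (if k = 0 \<or> k = n then 1 else 2)
       else if k = l + 1 \<or> l = k + 1 then -1 else 0) else 0)"

definition Dbar :: "nat \<Rightarrow> mat" where
  "Dbar n = (\<lambda>k l. if k \<le> n \<and> l \<le> n then
      (if k = l then (if k = 0 \<or> k = n then 2 else 4)
       else if k = l + 1 \<or> l = k + 1 then 1 else 0) else 0)"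

definition Bbar :: "nat \<Rightarrow> mat" where
  "Bbar n = (\<lambda>k l. if k < n \<and> l \<le> n then
      (if l = k then -1 else if l = k + 1 then 1 else 0) else 0)"

definition sbar :: "nat \<Rightarrow> nat \<Rightarrow> nat \<Rightarrow> real" where
  "sbar n j = (\<lambda>m. if m < n then nu n j * sin (real (2 * m + 1) * real j * pi / (2 * real n)) else 0)"

definition ctil :: "nat \<Rightarrow> nat \<Rightarrow> nat \<Rightarrow> real" where
  "ctil n j = (\<lambda>m. if m \<le> n then nu n j * cos (real m * real j * pi / real n) else 0)"

definition is_eigensol :: "nat \<Rightarrow> real \<Rightarrow> mat \<Rightarrow> mat \<Rightarrow> bool" where
  "is_eigensol n lam U V \<longleftrightarrow>
     (let h = 1 / real n; A = Abar n; B = Bbar n; D = Dbar n in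
      meq n (n + 1)
        (\<lambda>i j. mmul (n + 1) U A i j - mmul n (mmul (n + 1) B V) B i j)
        (\<lambda>i j. h\<^sup>2 / 6 * lam * mmul (n + 1) U D i j) \<and>
      meq (n + 1) n
        (\<lambda>i j. - mmul (n + 1) (mmul n (mtr B) U) (mtr B) i j + mmul (n + 1) A V i j)
        (\<lambda>i j. h\<^sup>2 / 6 * lam * mmul (n + 1) D V i j) \<and>
      (mnz n (n + 1) U \<or> mnz (n + 1) n V))"

definition div_free :: "nat \<Rightarrow> mat \<Rightarrow> mat \<Rightarrow> bool" where
  "div_free n U V \<longleftrightarrow>
     meq (n + 1) (n + 1)
       (\<lambda>i j. mmul (n + 1) (mmul n (mtr (Bbar n)) U) (Dbar n) i j
             + mmul n (mmul (n + 1) (Dbar n) V) (Bbar n) i j)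
       (\<lambda>i j. 0)"

definition lam1 :: "nat \<Rightarrow> nat \<Rightarrow> nat \<Rightarrow> real" where
  "lam1 n i j = 6 / (1 / real n)\<^sup>2 * ((tau n i)\<^sup>2 / sigma n i + (tau n j)\<^sup>2 / sigma n j)"

definition U1 :: "nat \<Rightarrow> nat \<Rightarrow> nat \<Rightarrow> mat" where
  "U1 n i j = (\<lambda>a b. tau n j * sigma n i * outer (sbar n i) (ctil n j) a b)"

definition V1 :: "nat \<Rightarrow> nat \<Rightarrow> nat \<Rightarrow> mat" where
  "V1 n i j = (\<lambda>a b. - tau n i * sigma n j * outer (ctil n i) (sbar n j) a b)"

definition U0 :: "nat \<Rightarrow> nat \<Rightarrow> nat \<Rightarrow> mat" where
  "U0 n i j = (\<lambda>a b. tau n i * outer (sbar n i) (ctil n j) a b)"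

definition V0 :: "nat \<Rightarrow> nat \<Rightarrow> nat \<Rightarrow> mat" where
  "V0 n i j = (\<lambda>a b. tau n j * outer (ctil n i) (sbar n j) a b)"

definition I1 :: "nat \<Rightarrow> (nat \<times> nat) set" where
  "I1 n = {1..n} \<times> {1..n}"

definition I0 :: "nat \<Rightarrow> (nat \<times> nat) set" where
  "I0 n = {0..n} \<times> {0..n} - {(0, 0)}"

end

theory Submission
  imports Defs
begin

lemma OS_aux:
  assumes n: "0 < n" and z: "0 < z" "z < 2*n"
  shows "(\<Sum>r<n. cos ((2*real r+1) * real z * pi / (2*real n))) = 0"
proof -
  define y where "y = real z * pi / (2*real n)"
  have y0: "0 < y" using n z by (simp add: y_def)
  have y1: "y < pi" using n z by (simp add: y_def field_simps)
  have sy: "sin y > 0" using y0 y1 by (simp add: sin_gt_zero)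
  have e: "\<And>r. 2 * sin y * cos ((2*real r+1) * real z * pi / (2*real n))
      = sin (2 * real (Suc r) * y) - sin (2 * real r * y)"
  proof -
    fix r
    have "cos ((2*real r+1) * real z * pi / (2*real n)) = cos ((2*real r+1)*y)"
      by (simp add: y_def mult.assoc)
    moreover have "2 * sin y * cos ((2*real r+1)*y) = sin (y + (2*real r+1)*y) + sin (y - (2*real r+1)*y)"
      using sin_times_cos[of y "(2*real r+1)*y"] by simp
    moreover have "y + (2*real r+1)*y = 2 * real (Suc r) * y" by (simp add: algebra_simps)
    moreover have "y - (2*real r+1)*y = - (2 * real r * y)" by (simp add: algebra_simps)
    ultimately show "2 * sin y * cos ((2*real r+1) * real z * pi / (2*real n))
      = sin (2 * real (Suc r) * y) - sin (2 * real r * y)" by simp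
  qed
  have "2 * sin y * (\<Sum>r<n. cos ((2*real r+1) * real z * pi / (2*real n)))
     = (\<Sum>r<n. sin (2 * real (Suc r) * y) - sin (2 * real r * y))"
    by (simp add: sum_distrib_left e)
  also have "\<dots> = sin (2 * real n * y) - sin (2 * real 0 * y)"
    by (rule sum_lessThan_telescope[where f = "\<lambda>r. sin (2 * real r * y)"])
  also have "2 * real n * y = real z * pi" using n by (simp add: y_def)
  finally show ?thesis using sy by simp
qed

lemma OS:
  assumes n: "0 < n" and z: "z \<le> 2*n"
  shows "(\<Sum>r<n. cos ((2*real r+1) * real z * pi / (2*real n)))
     = (if z = 0 then real n else if z = 2*n then - real n else 0)"
proof (cases "z = 0")
  case True then show ?thesis by simp
next
  case False
  show ?thesis
  proof (cases "z = 2*n")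
    case True
    have "\<And>r. (2*real r+1) * real z * pi / (2*real n) = real (2*r+1) * pi"
      using n True by (simp add: field_simps)
    then have "\<And>r. cos ((2*real r+1) * real z * pi / (2*real n)) = -1"
      by (simp only: cos_npi) simp
    then show ?thesis using True n by simp
  next
    case F2: False
    then show ?thesis using OS_aux[of n z] n z False by simp
  qed
qed

lemma nu_sq: "(nu n m)\<^sup>2 = (if m = 0 \<or> m = n then 1/2 else 1)"
  by (simp add: nu_def power_divide)

lemma CS_aux:
  assumes n: "0 < n" and z: "0 < z" "z < 2*n"
  shows "(\<Sum>m<n. cos (real m * real z * pi / real n)) = (1 - (-1)^z) / 2"
proof -
  define y where "y = real z * pi / (2*real n)"
  have y0: "0 < y" using n z by (simp add: y_def)
  have y1: "y < pi" using n z by (simp add: y_def field_simps)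
  have sy: "sin y > 0" using y0 y1 by (simp add: sin_gt_zero)
  have e: "\<And>m. 2 * sin y * cos (real m * real z * pi / real n)
      = sin ((2 * real (Suc m) - 1) * y) - sin ((2 * real m - 1) * y)"
  proof -
    fix m
    have "cos (real m * real z * pi / real n) = cos ((2*real m)*y)"
      using n by (simp add: y_def field_simps)
    moreover have "2 * sin y * cos ((2*real m)*y) = sin (y + (2*real m)*y) + sin (y - (2*real m)*y)"
      using sin_times_cos[of y "(2*real m)*y"] by simp
    moreover have "y + (2*real m)*y = (2 * real (Suc m) - 1) * y" by (simp add: algebra_simps)
    moreover have "y - (2*real m)*y = - ((2 * real m - 1) * y)" by (simp add: algebra_simps)
    ultimately show "2 * sin y * cos (real m * real z * pi / real n)
      = sin ((2 * real (Suc m) - 1) * y) - sin ((2 * real m - 1) * y)" by simp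
  qed
  have "2 * sin y * (\<Sum>m<n. cos (real m * real z * pi / real n))
     = (\<Sum>m<n. sin ((2 * real (Suc m) - 1) * y) - sin ((2 * real m - 1) * y))"
    by (simp add: sum_distrib_left e)
  also have "\<dots> = sin ((2 * real n - 1) * y) - sin ((2 * real 0 - 1) * y)"
    by (rule sum_lessThan_telescope[where f = "\<lambda>m. sin ((2 * real m - 1) * y)"])
  also have "(2 * real n - 1) * y = real z * pi - y" using n by (simp add: y_def field_simps)
  also have "sin (real z * pi - y) = - ((-1)^z * sin y)" by (simp add: sin_diff)
  finally have "sin y * (2 * (\<Sum>m<n. cos (real m * real z * pi / real n))) = sin y * (1 - (-1)^z)"
    by (simp add: algebra_simps)
  then have "2 * (\<Sum>m<n. cos (real m * real z * pi / real n)) = 1 - (-1)^z"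
    using sy by simp
  then show ?thesis by simp
qed

lemma TS:
  assumes n: "0 < n" and z: "z \<le> 2*n"
  shows "(\<Sum>m<n+1. (nu n m)\<^sup>2 * cos (real m * real z * pi / real n))
     = (if z = 0 \<or> z = 2*n then real n else 0)"
proof -
  define f where "f m = cos (real m * real z * pi / real n)" for m
  have s1: "(\<Sum>m<n+1. (nu n m)\<^sup>2 * f m) = (\<Sum>m<n. (nu n m)\<^sup>2 * f m) + f n / 2"
    by (simp add: nu_sq)
  have "(\<Sum>m<n. (nu n m)\<^sup>2 * f m) = (\<Sum>m<n. f m - (if m = 0 then f 0 / 2 else 0))"
    by (rule sum.cong) (auto simp: nu_sq)
  also have "\<dots> = (\<Sum>m<n. f m) - f 0 / 2"
    using n by (simp add: sum_subtractf)
  finally have s2: "(\<Sum>m<n+1. (nu n m)\<^sup>2 * f m) = (\<Sum>m<n. f m) - f 0 / 2 + f n / 2"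
    using s1 by simp
  have f0: "f 0 = 1" by (simp add: f_def)
  show ?thesis
  proof (cases "z = 0 \<or> z = 2*n")
    case True
    have "\<And>m. f m = 1"
    proof -
      fix m
      show "f m = 1"
      proof (cases "z = 0")
        case True then show ?thesis by (simp add: f_def)
      next
        case False
        then have "z = 2*n" using \<open>z = 0 \<or> z = 2*n\<close> by simp
        then have "real m * real z * pi / real n = real (2*m) * pi" using n by (simp add: field_simps)
        then show ?thesis by (simp only: f_def cos_npi) simp
      qed
    qed
    then have "(\<Sum>m<n+1. (nu n m)\<^sup>2 * f m) = real n" using s2 by simp
    then show ?thesis using True by (simp add: f_def)
  next
    case False
    then have z': "0 < z" "z < 2*n" using z by auto
    have "f n = (-1)^z" using n by (simp add: f_def mult.commute)
    moreover have "(\<Sum>m<n. f m) = (1 - (-1)^z)/2" unfolding f_def using CS_aux[OF n z'] .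
    ultimately show ?thesis using s2 f0 False by (simp add: field_simps f_def)
  qed
qed

lemma cos_absdiff:
  "cos (c * (real k - real i) * e) = cos (c * real (if i \<le> k then k - i else i - k) * e)"
proof (cases "i \<le> k")
  case True then show ?thesis by (simp add: of_nat_diff)
next
  case False
  then have "c * (real k - real i) * e = - (c * real (i - k) * e)" by (simp add: of_nat_diff algebra_simps)
  then show ?thesis using False by (simp only: cos_minus) simp
qed

lemma T1:
  assumes n: "0 < n" and k: "1 \<le> k" "k \<le> n" and i: "1 \<le> i" "i \<le> n"
  shows "(\<Sum>r<n. sbar n k r * sbar n i r) = (if i = k then real n / 2 else 0)"
proof -
  define d where "d = (if i \<le> k then k - i else i - k)"
  have e: "sbar n k r * sbar n i r = nu n k * nu n i / 2 *
      (cos ((2*real r+1) * real d * pi / (2*real n)) - cos ((2*real r+1) * real (k+i) * pi / (2*real n)))"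
    if "r < n" for r
  proof -
    have "sbar n k r * sbar n i r = nu n k * nu n i *
       (sin ((2*real r+1) * real k * pi / (2*real n)) * sin ((2*real r+1) * real i * pi / (2*real n)))"
      using that by (simp add: sbar_def algebra_simps)
    also have "\<dots> = nu n k * nu n i / 2 *
       (cos ((2*real r+1) * real k * pi / (2*real n) - (2*real r+1) * real i * pi / (2*real n))
        - cos ((2*real r+1) * real k * pi / (2*real n) + (2*real r+1) * real i * pi / (2*real n)))"
      by (simp add: sin_times_sin)
    also have "(2*real r+1) * real k * pi / (2*real n) - (2*real r+1) * real i * pi / (2*real n)
        = (2*real r+1) * (real k - real i) * (pi / (2*real n))"
      using n by (simp add: field_simps)
    also have "cos \<dots> = cos ((2*real r+1) * real d * (pi / (2*real n)))"
      unfolding d_def by (rule cos_absdiff)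
    also have "(2*real r+1) * real k * pi / (2*real n) + (2*real r+1) * real i * pi / (2*real n)
        = (2*real r+1) * real (k+i) * pi / (2*real n)"
      using n by (simp add: field_simps)
    finally show ?thesis by simp
  qed
  have "(\<Sum>r<n. sbar n k r * sbar n i r) = (\<Sum>r<n. nu n k * nu n i / 2 *
      (cos ((2*real r+1) * real d * pi / (2*real n)) - cos ((2*real r+1) * real (k+i) * pi / (2*real n))))"
    by (rule sum.cong) (simp_all add: e)
  also have "\<dots> = nu n k * nu n i / 2 *
      ((\<Sum>r<n. cos ((2*real r+1) * real d * pi / (2*real n))) - (\<Sum>r<n. cos ((2*real r+1) * real (k+i) * pi / (2*real n))))"
    by (simp only: sum_subtractf[symmetric] sum_distrib_left)
  also have "\<dots> = nu n k * nu n i / 2 * ((if d = 0 then real n else 0) -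
        (if k + i = 2*n then - real n else 0))"
  proof -
    have "d < 2*n" using k i by (auto simp: d_def)
    then have "(\<Sum>r<n. cos ((2*real r+1) * real d * pi / (2*real n))) = (if d = 0 then real n else 0)"
      using OS[OF n, of d] by simp
    moreover have "(\<Sum>r<n. cos ((2*real r+1) * real (k+i) * pi / (2*real n))) = (if k + i = 2*n then - real n else 0)"
      using OS[OF n, of "k+i"] k i by simp
    ultimately show ?thesis by simp
  qed
  finally have *: "(\<Sum>r<n. sbar n k r * sbar n i r) = \<dots>" .
  show ?thesis
  proof (cases "i = k")
    case True
    then show ?thesis using * k by (auto simp: d_def nu_def)
  next
    case False
    then have "d \<noteq> 0" "k + i \<noteq> 2*n" using k i by (auto simp: d_def)
    then show ?thesis using * False by simp
  qed
qed

lemma T2: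
  assumes n: "0 < n" and r: "r < n" "r' < n"
  shows "(\<Sum>i<n+1. sbar n i r * sbar n i r') = (if r = r' then real n / 2 else 0)"
proof -
  define d where "d = (if r' \<le> r then r - r' else r' - r)"
  have e: "sbar n i r * sbar n i r' = 1/2 * ((nu n i)\<^sup>2 * cos (real i * real d * pi / real n)
       - (nu n i)\<^sup>2 * cos (real i * real (r+r'+1) * pi / real n))" for i
  proof -
    have "sbar n i r * sbar n i r' = (nu n i)\<^sup>2 *
       (sin ((2*real r+1) * real i * pi / (2*real n)) * sin ((2*real r'+1) * real i * pi / (2*real n)))"
      using r by (simp add: sbar_def algebra_simps power2_eq_square)
    also have "\<dots> = (nu n i)\<^sup>2 / 2 *
       (cos ((2*real r+1) * real i * pi / (2*real n) - (2*real r'+1) * real i * pi / (2*real n))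
        - cos ((2*real r+1) * real i * pi / (2*real n) + (2*real r'+1) * real i * pi / (2*real n)))"
      by (simp add: sin_times_sin)
    also have "(2*real r+1) * real i * pi / (2*real n) - (2*real r'+1) * real i * pi / (2*real n)
        = real i * (real r - real r') * (pi / real n)"
      using n by (simp add: field_simps)
    also have "cos \<dots> = cos (real i * real d * (pi / real n))"
      unfolding d_def by (rule cos_absdiff)
    also have "(2*real r+1) * real i * pi / (2*real n) + (2*real r'+1) * real i * pi / (2*real n)
        = real i * real (r+r'+1) * pi / real n"
      using n by (simp add: field_simps)
    finally show ?thesis by (simp add: algebra_simps)
  qed
  have "(\<Sum>i<n+1. sbar n i r * sbar n i r') = 1/2 * ((\<Sum>i<n+1. (nu n i)\<^sup>2 * cos (real i * real d * pi / real n))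
       - (\<Sum>i<n+1. (nu n i)\<^sup>2 * cos (real i * real (r+r'+1) * pi / real n)))"
    by (simp only: e sum_subtractf[symmetric] sum_distrib_left)
  also have "\<dots> = 1/2 * ((if d = 0 then real n else 0) - 0)"
  proof -
    have "d < n" using r by (auto simp: d_def)
    then have "(\<Sum>i<n+1. (nu n i)\<^sup>2 * cos (real i * real d * pi / real n)) = (if d = 0 then real n else 0)"
      using TS[OF n, of d] by simp
    moreover have "(\<Sum>i<n+1. (nu n i)\<^sup>2 * cos (real i * real (r+r'+1) * pi / real n)) = 0"
      using TS[OF n, of "r+r'+1"] r by simp
    ultimately show ?thesis by simp
  qed
  finally have *: "(\<Sum>i<n+1. sbar n i r * sbar n i r') = 1/2 * ((if d = 0 then real n else 0) - 0)" .
  have "d = 0 \<longleftrightarrow> r = r'" by (auto simp: d_def)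
  then show ?thesis using * by (cases "r = r'") (simp_all del: sum.lessThan_Suc)
qed

lemma Wsum:
  assumes n: "0 < n" and pq: "p \<le> n" "q \<le> n"
  shows "(\<Sum>m<n+1. (nu n m)\<^sup>2 * (cos (real m * real p * pi / real n) * cos (real m * real q * pi / real n)))
     = (if p = q then (if p = 0 \<or> p = n then real n else real n / 2) else 0)"
proof -
  define d where "d = (if q \<le> p then p - q else q - p)"
  have e: "(nu n m)\<^sup>2 * (cos (real m * real p * pi / real n) * cos (real m * real q * pi / real n))
     = 1/2 * ((nu n m)\<^sup>2 * cos (real m * real d * pi / real n)
       + (nu n m)\<^sup>2 * cos (real m * real (p+q) * pi / real n))" for m
  proof -
    have "cos (real m * real p * pi / real n) * cos (real m * real q * pi / real n)
       = (cos (real m * real p * pi / real n - real m * real q * pi / real n)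
        + cos (real m * real p * pi / real n + real m * real q * pi / real n)) / 2"
      by (simp add: cos_times_cos)
    also have "real m * real p * pi / real n - real m * real q * pi / real n
        = real m * (real p - real q) * (pi / real n)"
      using n by (simp add: field_simps)
    also have "cos \<dots> = cos (real m * real d * (pi / real n))"
      unfolding d_def by (rule cos_absdiff)
    also have "real m * real p * pi / real n + real m * real q * pi / real n
        = real m * real (p+q) * pi / real n"
      using n by (simp add: field_simps)
    finally have h: "cos (real m * real p * pi / real n) * cos (real m * real q * pi / real n)
       = (cos (real m * real d * pi / real n) + cos (real m * real (p+q) * pi / real n)) / 2"
      by simp
    show ?thesis unfolding h by (simp add: algebra_simps)
  qed
  have "(\<Sum>m<n+1. (nu n m)\<^sup>2 * (cos (real m * real p * pi / real n) * cos (real m * real q * pi / real n)))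
     = 1/2 * ((\<Sum>m<n+1. (nu n m)\<^sup>2 * cos (real m * real d * pi / real n))
       + (\<Sum>m<n+1. (nu n m)\<^sup>2 * cos (real m * real (p+q) * pi / real n)))"
    by (simp only: e sum.distrib[symmetric] sum_distrib_left)
  also have "\<dots> = 1/2 * ((if d = 0 then real n else 0) + (if p + q = 0 \<or> p + q = 2*n then real n else 0))"
  proof -
    have "d \<le> n" using pq by (auto simp: d_def)
    then have "(\<Sum>m<n+1. (nu n m)\<^sup>2 * cos (real m * real d * pi / real n)) = (if d = 0 then real n else 0)"
      using TS[OF n, of d] n by auto
    moreover have "(\<Sum>m<n+1. (nu n m)\<^sup>2 * cos (real m * real (p+q) * pi / real n)) = (if p + q = 0 \<or> p + q = 2*n then real n else 0)"
      using TS[OF n, of "p+q"] pq by simp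
    ultimately show ?thesis by simp
  qed
  finally have *: "(\<Sum>m<n+1. (nu n m)\<^sup>2 * (cos (real m * real p * pi / real n) * cos (real m * real q * pi / real n)))
     = 1/2 * ((if d = 0 then real n else 0) + (if p + q = 0 \<or> p + q = 2*n then real n else 0))" .
  have "d = 0 \<longleftrightarrow> p = q" by (auto simp: d_def)
  then show ?thesis using * pq by auto
qed

lemma T3:
  assumes n: "0 < n" and lj: "l \<le> n" "j \<le> n"
  shows "(\<Sum>c<n+1. (nu n c)\<^sup>2 * ctil n l c * ctil n j c) = (if j = l then real n / 2 else 0)"
proof -
  have "(\<Sum>c<n+1. (nu n c)\<^sup>2 * ctil n l c * ctil n j c)
     = (\<Sum>c<n+1. nu n l * nu n j * ((nu n c)\<^sup>2 * (cos (real c * real l * pi / real n) * cos (real c * real j * pi / real n))))"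
    by (rule sum.cong) (auto simp: ctil_def)
  also have "\<dots> = nu n l * nu n j * (if l = j then (if l = 0 \<or> l = n then real n else real n / 2) else 0)"
    by (simp only: sum_distrib_left[symmetric] Wsum[OF n lj])
  finally show ?thesis by (auto simp: nu_def)
qed

lemma T3':
  assumes n: "0 < n" and c: "c \<le> n" "c' \<le> n"
  shows "(\<Sum>j<n+1. (nu n c)\<^sup>2 * ctil n j c * ctil n j c') = (if c = c' then real n / 2 else 0)"
proof -
  have "(\<Sum>j<n+1. (nu n c)\<^sup>2 * ctil n j c * ctil n j c')
     = (\<Sum>j<n+1. (nu n c)\<^sup>2 * ((nu n j)\<^sup>2 * (cos (real j * real c * pi / real n) * cos (real j * real c' * pi / real n))))"
    by (rule sum.cong) (auto simp: ctil_def c ac_simps power2_eq_square)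
  also have "\<dots> = (nu n c)\<^sup>2 * (if c = c' then (if c = 0 \<or> c = n then real n else real n / 2) else 0)"
    by (simp only: sum_distrib_left[symmetric] Wsum[OF n c])
  finally show ?thesis by (auto simp: nu_def power_divide)
qed

lemma sbar0: "sbar n 0 r = 0" by (simp add: sbar_def)

lemma T1':
  assumes n: "0 < n" and k: "1 \<le> k" "k \<le> n" and i: "i \<le> n"
  shows "(\<Sum>r<n. sbar n k r * sbar n i r) = (if i = k then real n / 2 else 0)"
proof (cases "i = 0")
  case True then show ?thesis using k by (simp add: sbar0)
next
  case False then show ?thesis using T1[OF n k, of i] i by simp
qed

lemma sumG: "(\<Sum>p\<in>{0..(n::nat)}\<times>{0..n}. f p) = (\<Sum>i<n+1. \<Sum>j<n+1. f (i,j))"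
proof -
  have "{0..n} = {..<n+1}" by auto
  then show ?thesis by (simp add: sum.cartesian_product del: sum.lessThan_Suc)
qed

lemma UB_indep:
  assumes n: "0 < n"
    and H: "\<forall>r<n. \<forall>c<n+1. (\<Sum>p\<in>{0..n}\<times>{0..n}. \<alpha> p * (sbar n (fst p) r * ctil n (snd p) c)) = 0"
    and k: "1 \<le> k" "k \<le> n" and l: "l \<le> n"
  shows "\<alpha> (k,l) = 0"
proof -
  let ?G = "{0..n}\<times>{0..n}"
  have "0 = (\<Sum>r<n. \<Sum>c<n+1. sbar n k r * ((nu n c)\<^sup>2 * ctil n l c) *
        (\<Sum>p\<in>?G. \<alpha> p * (sbar n (fst p) r * ctil n (snd p) c)))"
    using H by simp
  also have "\<dots> = (\<Sum>r<n. \<Sum>c<n+1. \<Sum>p\<in>?G. \<alpha> p * ((sbar n k r * sbar n (fst p) r) *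
        ((nu n c)\<^sup>2 * ctil n l c * ctil n (snd p) c)))"
    by (simp add: sum_distrib_left ac_simps del: sum.lessThan_Suc)
  also have "\<dots> = (\<Sum>r<n. \<Sum>p\<in>?G. \<Sum>c<n+1. \<alpha> p * ((sbar n k r * sbar n (fst p) r) *
        ((nu n c)\<^sup>2 * ctil n l c * ctil n (snd p) c)))"
    by (rule sum.cong[OF refl], rule sum.swap)
  also have "\<dots> = (\<Sum>p\<in>?G. \<Sum>r<n. \<Sum>c<n+1. \<alpha> p * ((sbar n k r * sbar n (fst p) r) *
        ((nu n c)\<^sup>2 * ctil n l c * ctil n (snd p) c)))"
    by (rule sum.swap)
  also have "\<dots> = (\<Sum>p\<in>?G. \<alpha> p * ((\<Sum>r<n. sbar n k r * sbar n (fst p) r) *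
        (\<Sum>c<n+1. (nu n c)\<^sup>2 * ctil n l c * ctil n (snd p) c)))"
    unfolding sum_product by (simp only: sum_distrib_left)
  also have "\<dots> = (\<Sum>p\<in>?G. if p = (k,l) then \<alpha> p * (real n / 2 * (real n / 2)) else 0)"
  proof (rule sum.cong[OF refl])
    fix p assume p: "p \<in> ?G"
    obtain i j where pij: "p = (i,j)" by (cases p)
    have ij: "i \<le> n" "j \<le> n" using p pij by auto
    show "\<alpha> p * ((\<Sum>r<n. sbar n k r * sbar n (fst p) r) *
        (\<Sum>c<n+1. (nu n c)\<^sup>2 * ctil n l c * ctil n (snd p) c)) =
        (if p = (k,l) then \<alpha> p * (real n / 2 * (real n / 2)) else 0)"
      using T1'[OF n k ij(1)] T3[OF n l ij(2)] pij by auto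
  qed
  also have "\<dots> = \<alpha> (k,l) * (real n / 2 * (real n / 2))"
    using k l by (simp add: sum.delta)
  finally show ?thesis using n by simp
qed

lemma UB_span:
  assumes n: "0 < n"
  shows "\<exists>\<alpha>. \<forall>r'<n. \<forall>c'<n+1. X r' c' = (\<Sum>p\<in>{0..n}\<times>{0..n}. \<alpha> p * (sbar n (fst p) r' * ctil n (snd p) c'))"
proof -
  define \<alpha> where "\<alpha> p = (2 / real n)\<^sup>2 * (\<Sum>r<n. \<Sum>c<n+1. X r c * sbar n (fst p) r * ((nu n c)\<^sup>2 * ctil n (snd p) c))" for p
  have "X r' c' = (\<Sum>p\<in>{0..n}\<times>{0..n}. \<alpha> p * (sbar n (fst p) r' * ctil n (snd p) c'))"
    if r': "r' < n" and c': "c' < n+1" for r' c'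
  proof -
    have "(\<Sum>p\<in>{0..n}\<times>{0..n}. \<alpha> p * (sbar n (fst p) r' * ctil n (snd p) c'))
       = (\<Sum>i<n+1. \<Sum>j<n+1. \<Sum>r<n. \<Sum>c<n+1. (2 / real n)\<^sup>2 * X r c *
            ((sbar n i r * sbar n i r') * ((nu n c)\<^sup>2 * ctil n j c * ctil n j c')))"
      by (simp add: sumG \<alpha>_def sum_distrib_left sum_distrib_right ac_simps del: sum.lessThan_Suc)
    also have "\<dots> = (\<Sum>i<n+1. \<Sum>r<n. \<Sum>j<n+1. \<Sum>c<n+1. (2 / real n)\<^sup>2 * X r c *
            ((sbar n i r * sbar n i r') * ((nu n c)\<^sup>2 * ctil n j c * ctil n j c')))"
      by (rule sum.cong[OF refl], rule sum.swap)
    also have "\<dots> = (\<Sum>i<n+1. \<Sum>r<n. \<Sum>c<n+1. \<Sum>j<n+1. (2 / real n)\<^sup>2 * X r c *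
            ((sbar n i r * sbar n i r') * ((nu n c)\<^sup>2 * ctil n j c * ctil n j c')))"
      by (rule sum.cong[OF refl], rule sum.cong[OF refl], rule sum.swap)
    also have "\<dots> = (\<Sum>r<n. \<Sum>i<n+1. \<Sum>c<n+1. \<Sum>j<n+1. (2 / real n)\<^sup>2 * X r c *
            ((sbar n i r * sbar n i r') * ((nu n c)\<^sup>2 * ctil n j c * ctil n j c')))"
      by (rule sum.swap)
    also have "\<dots> = (\<Sum>r<n. \<Sum>c<n+1. \<Sum>i<n+1. \<Sum>j<n+1. (2 / real n)\<^sup>2 * X r c *
            ((sbar n i r * sbar n i r') * ((nu n c)\<^sup>2 * ctil n j c * ctil n j c')))"
      by (rule sum.cong[OF refl], rule sum.swap)
    also have "\<dots> = (\<Sum>r<n. \<Sum>c<n+1. (2 / real n)\<^sup>2 * X r c *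
            ((\<Sum>i<n+1. sbar n i r * sbar n i r') * (\<Sum>j<n+1. (nu n c)\<^sup>2 * ctil n j c * ctil n j c')))"
      unfolding sum_product by (simp only: sum_distrib_left)
    also have "\<dots> = (\<Sum>r<n. \<Sum>c<n+1. if r = r' then (if c = c' then X r c else 0) else 0)"
    proof (rule sum.cong[OF refl], rule sum.cong[OF refl])
      fix r c assume r: "r \<in> {..<n}" and c: "c \<in> {..<n+1}"
      show "(2 / real n)\<^sup>2 * X r c *
            ((\<Sum>i<n+1. sbar n i r * sbar n i r') * (\<Sum>j<n+1. (nu n c)\<^sup>2 * ctil n j c * ctil n j c'))
          = (if r = r' then (if c = c' then X r c else 0) else 0)"
        using T2[OF n, of r r'] T3'[OF n, of c c'] r c r' c' n
        by (auto simp: power2_eq_square)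
    qed
    also have "\<dots> = (\<Sum>r<n. if r = r' then (\<Sum>c<n+1. if c = c' then X r c else 0) else 0)"
      by (rule sum.cong) auto
    also have "\<dots> = X r' c'" using r' c' by (simp add: sum.delta del: sum.lessThan_Suc)
    finally show ?thesis by simp
  qed
  then show ?thesis by blast
qed

lemma sumG_swap: "(\<Sum>p\<in>{0..(n::nat)}\<times>{0..n}. f (snd p, fst p)) = (\<Sum>p\<in>{0..n}\<times>{0..n}. f p)"
  unfolding sumG by (simp only: fst_conv snd_conv) (rule sum.swap)

lemma VB_indep:
  assumes n: "0 < n"
    and H: "\<forall>r<n+1. \<forall>c<n. (\<Sum>p\<in>{0..n}\<times>{0..n}. \<beta> p * (ctil n (fst p) r * sbar n (snd p) c)) = 0"
    and k: "1 \<le> k" "k \<le> n" and l: "l \<le> n"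
  shows "\<beta> (l,k) = 0"
proof -
  have "\<forall>r<n. \<forall>c<n+1. (\<Sum>p\<in>{0..n}\<times>{0..n}. (\<lambda>p. \<beta> (snd p, fst p)) p * (sbar n (fst p) r * ctil n (snd p) c)) = 0"
  proof (intro allI impI)
    fix r c assume r: "r < n" and c: "c < n+1"
    have "(\<Sum>p\<in>{0..n}\<times>{0..n}. (\<lambda>p. \<beta> (snd p, fst p)) p * (sbar n (fst p) r * ctil n (snd p) c))
      = (\<Sum>p\<in>{0..n}\<times>{0..n}. (\<lambda>p. \<beta> p * (ctil n (fst p) c * sbar n (snd p) r)) (snd p, fst p))"
      by (rule sum.cong) (simp_all add: mult.commute)
    also have "\<dots> = (\<Sum>p\<in>{0..n}\<times>{0..n}. \<beta> p * (ctil n (fst p) c * sbar n (snd p) r))"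
      by (rule sumG_swap)
    also have "\<dots> = 0" using H r c by blast
    finally show "(\<Sum>p\<in>{0..n}\<times>{0..n}. (\<lambda>p. \<beta> (snd p, fst p)) p * (sbar n (fst p) r * ctil n (snd p) c)) = 0" .
  qed
  from UB_indep[OF n this k l] show ?thesis by (simp only: fst_conv snd_conv)
qed

lemma VB_span:
  assumes n: "0 < n"
  shows "\<exists>\<beta>. \<forall>r'<n+1. \<forall>c'<n. Y r' c' = (\<Sum>p\<in>{0..n}\<times>{0..n}. \<beta> p * (ctil n (fst p) r' * sbar n (snd p) c'))"
proof -
  obtain \<alpha> where A: "\<forall>r'<n. \<forall>c'<n+1. Y c' r' = (\<Sum>p\<in>{0..n}\<times>{0..n}. \<alpha> p * (sbar n (fst p) r' * ctil n (snd p) c'))"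
    using UB_span[OF n, of "\<lambda>c r. Y r c"] by blast
  have "Y r' c' = (\<Sum>p\<in>{0..n}\<times>{0..n}. (\<lambda>p. \<alpha> (snd p, fst p)) p * (ctil n (fst p) r' * sbar n (snd p) c'))"
    if "r' < n+1" "c' < n" for r' c'
  proof -
    have "Y r' c' = (\<Sum>p\<in>{0..n}\<times>{0..n}. \<alpha> p * (sbar n (fst p) c' * ctil n (snd p) r'))"
      by (rule A[rule_format]) (use that in auto)
    also have "\<dots> = (\<Sum>p\<in>{0..n}\<times>{0..n}. (\<lambda>p. \<alpha> p * (sbar n (fst p) c' * ctil n (snd p) r')) (snd p, fst p))"
      by (rule sumG_swap[symmetric])
    also have "\<dots> = (\<Sum>p\<in>{0..n}\<times>{0..n}. (\<lambda>p. \<alpha> (snd p, fst p)) p * (ctil n (fst p) r' * sbar n (snd p) c'))"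
      by (rule sum.cong) (simp_all add: mult.commute)
    finally show ?thesis .
  qed
  then show ?thesis by (intro exI[of _ "\<lambda>p. \<alpha> (snd p, fst p)"]) simp
qed

lemma Bsum_row:
  assumes k: "k < n"
  shows "(\<Sum>l<n+1. Bbar n k l * f l) = f (k+1) - f k"
proof -
  have "(\<Sum>l<n+1. Bbar n k l * f l) = (\<Sum>l<n+1. (if l = k+1 then f l else 0) - (if l = k then f l else 0))"
    by (rule sum.cong) (use k in \<open>auto simp: Bbar_def\<close>)
  also have "\<dots> = f (k+1) - f k" using k by (simp add: sum_subtractf sum.delta del: sum.lessThan_Suc)
  finally show ?thesis .
qed

lemma Bsum_col:
  assumes m: "m \<le> n"
  shows "(\<Sum>k<n. f k * Bbar n k m) = (if 1 \<le> m then f (m-1) else 0) - (if m < n then f m else 0)"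
proof (cases "m = 0")
  case True
  have "(\<Sum>k<n. f k * Bbar n k m) = (\<Sum>k<n. - (if k = 0 then f k else 0))"
    by (rule sum.cong) (use True in \<open>auto simp: Bbar_def\<close>)
  also have "\<dots> = (if 1 \<le> m then f (m-1) else 0) - (if m < n then f m else 0)"
    using True m by (simp add: sum_negf sum.delta)
  finally show ?thesis .
next
  case False
  have "(\<Sum>k<n. f k * Bbar n k m) = (\<Sum>k<n. (if k = m - 1 then f k else 0) - (if k = m then f k else 0))"
    by (rule sum.cong) (use False m in \<open>auto simp: Bbar_def\<close>)
  also have "\<dots> = (if 1 \<le> m then f (m-1) else 0) - (if m < n then f m else 0)"
  proof -
    have "m - 1 < n" using False m by linarith
    then show ?thesis using False m by (simp add: sum_subtractf sum.delta)
  qed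
  finally show ?thesis .
qed

lemma Abar_sym: "Abar n l m = Abar n m l" by (auto simp: Abar_def)
lemma Dbar_sym: "Dbar n l m = Dbar n m l" by (auto simp: Dbar_def)

lemma Aent:
  assumes n: "1 \<le> n" and m: "m \<le> n" and l: "l \<le> n"
  shows "Abar n l m = (if 1 \<le> m then (if l = m then 1 else 0) - (if l = m - 1 then 1 else 0) else 0)
        + (if m < n then (if l = m then 1 else 0) - (if l = m + 1 then 1 else 0) else 0)"
  using n m l unfolding Abar_def by (cases "m = 0"; cases "m = n"; cases "l = m"; cases "l = m + 1"; cases "l + 1 = m"; simp)

lemma tri_sum:
  fixes m n :: nat and f M :: "nat \<Rightarrow> real"
  assumes m: "m \<le> n"
    and hM: "\<And>l. l < n+1 \<Longrightarrow> M l = (if 1 \<le> m then a*(if l = m then 1 else 0) + b*(if l = m-1 then 1 else 0) else 0)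
        + (if m < n then a*(if l = m then 1 else 0) + b*(if l = m+1 then 1 else 0) else 0)"
  shows "(\<Sum>l<n+1. f l * M l) = (if 1 \<le> m then a * f m + b * f (m-1) else 0) + (if m < n then a * f m + b * f (m+1) else 0)"
proof -
  define c1 where "c1 = (if 1 \<le> m then a else 0) + (if m < n then a else 0)"
  define c2 where "c2 = (if 1 \<le> m then b else 0)"
  define c3 where "c3 = (if m < n then b else 0)"
  have d: "m - 1 \<noteq> m \<or> \<not> 1 \<le> m" "m + 1 \<noteq> m" "m - 1 \<noteq> m + 1" by auto
  have "(\<Sum>l<n+1. f l * M l) = (\<Sum>l<n+1. (if l = m then c1 * f l else 0) + (if l = m-1 then c2 * f l else 0)
      + (if l = m+1 then c3 * f l else 0))"
  proof (rule sum.cong[OF refl])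
    fix l assume l: "l \<in> {..<n+1}"
    show "f l * M l = (if l = m then c1 * f l else 0) + (if l = m-1 then c2 * f l else 0)
      + (if l = m+1 then c3 * f l else 0)"
      using d l unfolding c1_def c2_def c3_def
      by (cases "m = 0"; cases "l = m"; cases "l = m-1"; cases "l = m+1"; simp add: hM distrib_left)
  qed
  also have "\<dots> = c1 * f m + c2 * f (m-1) + (if m+1 < n+1 then c3 * f (m+1) else 0)"
  proof -
    have "m - 1 < n + 1" "m < n + 1" using m by simp_all
    then show ?thesis by (simp add: sum.distrib sum.delta del: sum.lessThan_Suc)
  qed
  also have "\<dots> = (if 1 \<le> m then a * f m + b * f (m-1) else 0) + (if m < n then a * f m + b * f (m+1) else 0)"
    using m unfolding c1_def c2_def c3_def by (cases "1 \<le> m"; cases "m < n"; simp add: algebra_simps)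
  finally show ?thesis .
qed

lemma Aent':
  assumes n: "1 \<le> n" and m: "m \<le> n" and l: "l < n+1"
  shows "Abar n l m = (if 1 \<le> m then 1*(if l = m then 1 else 0) + (-1)*(if l = m-1 then 1 else 0) else 0)
        + (if m < n then 1*(if l = m then 1 else 0) + (-1)*(if l = m+1 then 1 else 0) else 0)"
  using Aent[OF n m, of l] l by simp

lemma Dent':
  assumes n: "1 \<le> n" and m: "m \<le> n" and l: "l < n+1"
  shows "Dbar n l m = (if 1 \<le> m then 2*(if l = m then 1 else 0) + 1*(if l = m-1 then 1 else 0) else 0)
        + (if m < n then 2*(if l = m then 1 else 0) + 1*(if l = m+1 then 1 else 0) else 0)"
  using n m l unfolding Dbar_def by (cases "m = 0"; cases "m = n"; cases "l = m"; cases "l = m + 1"; cases "l + 1 = m"; simp)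

lemma Asum_col:
  assumes n: "1 \<le> n" and m: "m \<le> n"
  shows "(\<Sum>l<n+1. f l * Abar n l m) = (if 1 \<le> m then f m - f (m-1) else 0) + (if m < n then f m - f (m+1) else 0)"
  using tri_sum[OF m, of "\<lambda>l. Abar n l m" 1 "-1" f] Aent'[OF n m] by simp

lemma Dsum_col:
  assumes n: "1 \<le> n" and m: "m \<le> n"
  shows "(\<Sum>l<n+1. f l * Dbar n l m) = (if 1 \<le> m then 2 * f m + f (m-1) else 0) + (if m < n then 2 * f m + f (m+1) else 0)"
  using tri_sum[OF m, of "\<lambda>l. Dbar n l m" 2 1 f] Dent'[OF n m] by simp

definition th :: "nat \<Rightarrow> nat \<Rightarrow> real" where "th n j = real j * pi / (2 * real n)"
definition Sf :: "nat \<Rightarrow> nat \<Rightarrow> real \<Rightarrow> real" where "Sf n j x = nu n j * sin ((2*x+1) * th n j)"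
definition Cf :: "nat \<Rightarrow> nat \<Rightarrow> real \<Rightarrow> real" where "Cf n j x = nu n j * cos (2*x * th n j)"

lemma sbar_Sf: "m < n \<Longrightarrow> sbar n j m = Sf n j (real m)"
proof -
  assume m: "m < n"
  have "real (2 * m + 1) * real j * pi / (2 * real n) = (2 * real m + 1) * (real j * pi / (2 * real n))"
    by simp
  then show ?thesis using m by (simp only: sbar_def Sf_def th_def) simp
qed

lemma ctil_Cf: "0 < n \<Longrightarrow> m \<le> n \<Longrightarrow> ctil n j m = Cf n j (real m)"
proof -
  assume n: "0 < n" and m: "m \<le> n"
  have "real m * real j * pi / real n = 2 * real m * (real j * pi / (2 * real n))"
    using n by simp
  then show ?thesis using m by (simp only: ctil_def Cf_def th_def) simp
qed

lemma tau_th: "tau n j = - 2 * sin (th n j)"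
  by (simp add: tau_def th_def)

lemma sigma_th: "0 < n \<Longrightarrow> sigma n j = 2 * (2 + cos (2 * th n j))"
  by (simp add: sigma_def th_def)

lemma I6: "Cf n j (x+1) - Cf n j x = tau n j * Sf n j x"
proof -
  define t where "t = th n j"
  define u where "u = (2*x+1)*t"
  have a: "2*(x+1)*t = u + t" "2*x*t = u - t" by (simp_all add: u_def algebra_simps)
  show ?thesis unfolding Cf_def Sf_def tau_th t_def[symmetric] u_def[symmetric] a
    by (simp add: cos_add cos_diff algebra_simps)
qed

lemma I1: "Sf n j (x-1) - Sf n j x = tau n j * Cf n j x"
proof -
  define t where "t = th n j"
  define u where "u = 2*x*t"
  have a: "(2*(x-1)+1)*t = u - t" "(2*x+1)*t = u + t" by (simp_all add: u_def algebra_simps)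
  show ?thesis unfolding Cf_def Sf_def tau_th t_def[symmetric] u_def[symmetric] a
    by (simp add: sin_add sin_diff algebra_simps)
qed

lemma I2: "0 < n \<Longrightarrow> Cf n j (x-1) + 4 * Cf n j x + Cf n j (x+1) = sigma n j * Cf n j x"
proof -
  assume n: "0 < n"
  define t where "t = th n j"
  define u where "u = 2*x*t"
  have a: "2*(x-1)*t = u - 2*t" "2*(x+1)*t = u + 2*t" by (simp_all add: u_def algebra_simps)
  show ?thesis unfolding Cf_def sigma_th[OF n] t_def[symmetric] u_def[symmetric] a
    by (simp add: cos_add cos_diff algebra_simps)
qed

lemma I3: "Sf n j (-1) = - Sf n j 0" "Cf n j (-1) = Cf n j 1"
  by (simp_all add: Sf_def Cf_def)

lemma I4:
  assumes n: "0 < n"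
  shows "Sf n j (real n) = - Sf n j (real n - 1)" "Cf n j (real n + 1) = Cf n j (real n - 1)"
proof -
  define t where "t = th n j"
  have jp: "2 * real n * t = real j * pi" using n by (simp add: t_def th_def)
  have a: "(2*real n+1)*t = real j * pi + t" "(2*(real n - 1)+1)*t = real j * pi - t"
     "2*(real n+1)*t = real j * pi + 2*t" "2*(real n-1)*t = real j * pi - 2*t"
    using jp by (simp_all add: algebra_simps)
  show "Sf n j (real n) = - Sf n j (real n - 1)"
    unfolding Sf_def t_def[symmetric] a by (simp add: sin_add sin_diff)
  show "Cf n j (real n + 1) = Cf n j (real n - 1)"
    unfolding Cf_def t_def[symmetric] a by (simp add: cos_add cos_diff)
qed

lemma cdiff:
  assumes n: "0 < n" and k: "k < n"
  shows "ctil n j (k+1) - ctil n j k = tau n j * sbar n j k"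
proof -
  have r: "real (k+1) = real k + 1" by simp
  have "ctil n j (k+1) - ctil n j k = Cf n j (real k + 1) - Cf n j (real k)"
    using ctil_Cf[OF n, of "k+1" j, unfolded r] ctil_Cf[OF n, of k j] k by simp
  also have "\<dots> = tau n j * Sf n j (real k)" by (rule I6)
  finally show ?thesis using k by (simp add: sbar_Sf)
qed

lemma F1:
  assumes n: "0 < n" and k: "k < n"
  shows "(\<Sum>l<n+1. Bbar n k l * ctil n j l) = tau n j * sbar n j k"
  using Bsum_row[OF k, of "ctil n j"] cdiff[OF n k, of j] by simp

lemma F2:
  assumes n: "1 \<le> n" and m: "m \<le> n"
  shows "(\<Sum>l<n+1. ctil n j l * Abar n l m) = tau n j * (\<Sum>k<n. sbar n j k * Bbar n k m)"
proof -
  have n0: "0 < n" using n by simp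
  have a: "ctil n j m - ctil n j (m-1) = tau n j * sbar n j (m-1)" if "1 \<le> m"
    using cdiff[OF n0, of "m-1" j] that m by simp
  have b: "ctil n j m - ctil n j (m+1) = - (tau n j * sbar n j m)" if "m < n"
    using cdiff[OF n0 that, of j] by simp
  show ?thesis
    unfolding Asum_col[OF n m] Bsum_col[OF m]
    using a b by (simp add: algebra_simps)
qed

lemma F3:
  assumes n: "1 \<le> n" and m: "m \<le> n"
  shows "sigma n j * (\<Sum>k<n. sbar n j k * Bbar n k m) = tau n j * (\<Sum>l<n+1. ctil n j l * Dbar n l m)"
proof -
  have n0: "0 < n" using n by simp
  show ?thesis
    unfolding Dsum_col[OF n m] Bsum_col[OF m]
  proof (cases "m = 0")
    case True
    have e1: "Sf n j (-1) - Sf n j 0 = tau n j * Cf n j 0" using I1[of n j 0] by simp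
    have e2: "Cf n j (-1) + 4 * Cf n j 0 + Cf n j 1 = sigma n j * Cf n j 0" using I2[OF n0, of j 0] by simp
    have s0: "Sf n j 0 = - tau n j * Cf n j 0 / 2" using e1 I3(1)[of n j] by simp
    have c1: "Cf n j 1 = (sigma n j * Cf n j 0 - 4 * Cf n j 0) / 2" using e2 I3(2)[of n j] by simp
    have A1: "sbar n j 0 = - tau n j * Cf n j 0 / 2" using n0 s0 by (simp add: sbar_Sf)
    have A2: "ctil n j 0 = Cf n j 0" using n0 n by (simp_all add: ctil_Cf)
    have A3: "ctil n j (0+1) = (sigma n j * Cf n j 0 - 4 * Cf n j 0) / 2"
      using ctil_Cf[OF n0, of 1 j] n c1 by simp
    have "sigma n j * (0 - sbar n j 0) = tau n j * (0 + (2 * ctil n j 0 + ctil n j (0 + 1)))"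
      unfolding A1 A2 A3 by (simp add: field_simps)
    then show "sigma n j * ((if 1 \<le> m then sbar n j (m - 1) else 0) - (if m < n then sbar n j m else 0)) =
      tau n j * ((if 1 \<le> m then 2 * ctil n j m + ctil n j (m - 1) else 0) +
        (if m < n then 2 * ctil n j m + ctil n j (m + 1) else 0))"
      using True n0 by simp
  next
    case False
    show "sigma n j * ((if 1 \<le> m then sbar n j (m - 1) else 0) - (if m < n then sbar n j m else 0)) =
      tau n j * ((if 1 \<le> m then 2 * ctil n j m + ctil n j (m - 1) else 0) +
        (if m < n then 2 * ctil n j m + ctil n j (m + 1) else 0))"
    proof (cases "m = n")
      case True
      have e1: "Sf n j (real n - 1) - Sf n j (real n) = tau n j * Cf n j (real n)" by (rule I1)
      have e2: "Cf n j (real n - 1) + 4 * Cf n j (real n) + Cf n j (real n + 1) = sigma n j * Cf n j (real n)"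
        by (rule I2[OF n0])
      have s0: "Sf n j (real n - 1) = tau n j * Cf n j (real n) / 2" using e1 I4(1)[OF n0, of j] by simp
      have c1: "Cf n j (real n - 1) = (sigma n j * Cf n j (real n) - 4 * Cf n j (real n)) / 2"
        using e2 I4(2)[OF n0, of j] by simp
      have A1: "sbar n j (n-1) = tau n j * Cf n j (real n) / 2" using n0 n s0 by (simp add: sbar_Sf of_nat_diff)
      have A2: "ctil n j n = Cf n j (real n)" using n0 by (simp add: ctil_Cf)
      have A3: "ctil n j (n-1) = (sigma n j * Cf n j (real n) - 4 * Cf n j (real n)) / 2"
        using n0 n c1 by (simp add: ctil_Cf of_nat_diff)
      have "sigma n j * (sbar n j (n - 1) - 0) = tau n j * ((2 * ctil n j n + ctil n j (n - 1)) + 0)"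
        unfolding A1 A2 A3 by (simp add: field_simps)
      then show ?thesis using True n by simp
    next
      case F2: False
      have mm: "1 \<le> m" "m < n" using False F2 m by auto
      have e1: "Sf n j (real m - 1) - Sf n j (real m) = tau n j * Cf n j (real m)" by (rule I1)
      have e2: "Cf n j (real m - 1) + 4 * Cf n j (real m) + Cf n j (real m + 1) = sigma n j * Cf n j (real m)"
        by (rule I2[OF n0])
      have "sbar n j (m-1) = Sf n j (real m - 1)" "sbar n j m = Sf n j (real m)"
        using mm by (simp_all add: sbar_Sf of_nat_diff)
      moreover have "ctil n j m = Cf n j (real m)" "ctil n j (m-1) = Cf n j (real m - 1)"
        using n0 mm by (simp_all add: ctil_Cf of_nat_diff)
      moreover have "ctil n j (m+1) = Cf n j (real m + 1)"
      proof -
        have r: "real (m+1) = real m + 1" by simp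
        show ?thesis using ctil_Cf[OF n0, of "m+1" j, unfolded r] mm by simp
      qed
      ultimately have h1: "sigma n j * (sbar n j (m - 1) - sbar n j m) = sigma n j * (tau n j * Cf n j (real m))"
        and h2: "tau n j * (2 * ctil n j m + ctil n j (m - 1) + (2 * ctil n j m + ctil n j (m + 1)))
          = tau n j * (sigma n j * Cf n j (real m))"
        using e1 e2 by (simp_all add: algebra_simps)
      have "sigma n j * (sbar n j (m - 1) - sbar n j m) = tau n j * (2 * ctil n j m + ctil n j (m - 1) + (2 * ctil n j m + ctil n j (m + 1)))"
        by (metis h1 h2 mult.left_commute)
      then show ?thesis using mm by simp
    qed
  qed
qed

lemma mm_outer_left:
  "mmul k (\<lambda>a b. \<alpha> * outer x y a b) M = (\<lambda>a b. \<alpha> * outer x (\<lambda>c. \<Sum>l<k. y l * M l c) a b)"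
  by (rule ext)+ (simp add: mmul_def outer_def sum_distrib_left ac_simps)

lemma mm_outer_right:
  "mmul k M (\<lambda>a b. \<alpha> * outer x y a b) = (\<lambda>a b. \<alpha> * outer (\<lambda>r. \<Sum>l<k. M r l * x l) y a b)"
  by (rule ext)+ (simp add: mmul_def outer_def sum_distrib_left sum_distrib_right ac_simps)

lemma U1_eq: "U1 n i j = (\<lambda>a b. (tau n j * sigma n i) * outer (sbar n i) (ctil n j) a b)"
  by (simp add: U1_def)
lemma V1_eq: "V1 n i j = (\<lambda>a b. (- tau n i * sigma n j) * outer (ctil n i) (sbar n j) a b)"
  by (simp add: V1_def)
lemma U0_eq: "U0 n i j = (\<lambda>a b. tau n i * outer (sbar n i) (ctil n j) a b)"
  by (simp add: U0_def)
lemma V0_eq: "V0 n i j = (\<lambda>a b. tau n j * outer (ctil n i) (sbar n j) a b)"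
  by (simp add: V0_def)

lemma sigma_pos: "0 < n \<Longrightarrow> sigma n j > 0"
  unfolding sigma_def using cos_ge_minus_one[of "real j * pi / real n"] by (smt (verit))

lemma F2r:
  assumes n: "1 \<le> n" and m: "m \<le> n"
  shows "(\<Sum>l<n+1. Abar n m l * ctil n j l) = tau n j * (\<Sum>k<n. sbar n j k * Bbar n k m)"
  using F2[OF n m, of j] by (simp add: Abar_sym[of n m] mult.commute)

lemma Dr:
  "(\<Sum>l<n+1. Dbar n m l * ctil n j l) = (\<Sum>l<n+1. ctil n j l * Dbar n l m)"
  by (simp add: Dbar_sym[of n m] mult.commute)

lemma BTr:
  "(\<Sum>l<n. mtr (Bbar n) r l * sbar n i l) = (\<Sum>k<n. sbar n i k * Bbar n k r)"
  by (simp add: mtr_def mult.commute)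

lemma F1t:
  assumes n: "0 < n" and c: "c < n"
  shows "(\<Sum>l<n+1. ctil n j l * mtr (Bbar n) l c) = tau n j * sbar n j c"
  using F1[OF n c, of j] by (simp add: mtr_def mult.commute)

lemma alg_eq1:
  fixes si sj ti tj s b d :: real
  assumes si: "si > 0" and sj: "sj > 0" and h: "tj * d = sj * b"
  shows "(tj*si)*(s*(tj*b)) - (-ti*sj)*((ti*s)*b) = (ti\<^sup>2/si + tj\<^sup>2/sj) * ((tj*si)*(s*d))"
proof -
  have "(ti\<^sup>2/si + tj\<^sup>2/sj) * ((tj*si)*(s*d)) = (ti\<^sup>2/si + tj\<^sup>2/sj) * (si*s*(tj*d))"
    by (simp add: algebra_simps)
  also have "\<dots> = (ti\<^sup>2/si + tj\<^sup>2/sj) * (si*s*(sj*b))" unfolding h ..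
  also have "\<dots> = (tj*si)*(s*(tj*b)) - (-ti*sj)*((ti*s)*b)"
    using si sj by (simp add: field_simps power2_eq_square)
  finally show ?thesis by simp
qed

lemma alg_eq2:
  fixes si sj ti tj s b d :: real
  assumes si: "si > 0" and sj: "sj > 0" and h: "ti * d = si * b"
  shows "- ((tj*si)*(b*(tj*s))) + (-ti*sj)*((ti*b)*s) = (ti\<^sup>2/si + tj\<^sup>2/sj) * ((-ti*sj)*(d*s))"
proof -
  have "(ti\<^sup>2/si + tj\<^sup>2/sj) * ((-ti*sj)*(d*s)) = - ((ti\<^sup>2/si + tj\<^sup>2/sj) * (sj*s*(ti*d)))"
    by (simp add: algebra_simps)
  also have "\<dots> = - ((ti\<^sup>2/si + tj\<^sup>2/sj) * (sj*s*(si*b)))" unfolding h ..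
  also have "\<dots> = - ((tj*si)*(b*(tj*s))) + (-ti*sj)*((ti*b)*s)"
    using si sj by (simp add: field_simps power2_eq_square)
  finally show ?thesis by simp
qed

lemma alg_div:
  fixes si sj ti tj bi bj di dj :: real
  assumes hi: "si * bi = ti * di" and hj: "sj * bj = tj * dj"
  shows "(tj*si)*(bi*dj) + (-ti*sj)*(di*bj) = 0"
proof -
  have "(tj*si)*(bi*dj) = tj*dj*(si*bi)" by (simp add: algebra_simps)
  also have "\<dots> = tj*dj*(ti*di)" unfolding hi ..
  also have "\<dots> = ti*di*(sj*bj)" unfolding hj by (simp add: algebra_simps)
  finally show ?thesis by (simp add: algebra_simps)
qed

lemma nu_pos: "nu n j > 0" by (simp add: nu_def)

lemma tau_nz:
  assumes "1 \<le> i" "i \<le> n"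
  shows "tau n i \<noteq> 0"
proof -
  have n0: "0 < n" using assms by simp
  have a: "0 < real i * pi / (2 * real n)" using assms by simp
  have "real i * pi \<le> real n * pi" using assms by (simp add: mult_right_mono)
  then have "real i * pi / (2 * real n) \<le> real n * pi / (2 * real n)"
    by (rule divide_right_mono) simp
  also have "\<dots> < pi" using n0 by simp
  finally have "sin (real i * pi / (2 * real n)) > 0" using a by (simp add: sin_gt_zero)
  then show ?thesis by (simp add: tau_def)
qed

lemma sbar0_nz:
  assumes "1 \<le> i" "i \<le> n"
  shows "sbar n i 0 \<noteq> 0"
proof -
  have "tau n i \<noteq> 0" using tau_nz[OF assms] .
  then have "sin (real i * pi / (2 * real n)) \<noteq> 0" by (simp add: tau_def)
  moreover have "0 < n" using assms by simp
  ultimately show ?thesis using nu_pos[of n i] by (simp add: sbar_def)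
qed

lemma ctil0_nz: "ctil n j 0 \<noteq> 0"
  using nu_pos[of n j] by (simp add: ctil_def)

lemma fam1:
  assumes n: "1 \<le> n" and i: "1 \<le> i" "i \<le> n" and j: "1 \<le> j" "j \<le> n"
  shows "is_eigensol n (lam1 n i j) (U1 n i j) (V1 n i j) \<and> div_free n (U1 n i j) (V1 n i j)"
proof -
  have n0: "0 < n" using n by simp
  define bt where "bt q c = (\<Sum>k<n. sbar n q k * Bbar n k c)" for q c
  define dc where "dc q c = (\<Sum>l<n+1. ctil n q l * Dbar n l c)" for q c
  define \<mu> where "\<mu> = (tau n i)\<^sup>2/sigma n i + (tau n j)\<^sup>2/sigma n j"
  have hl: "(1 / real n)\<^sup>2 / 6 * lam1 n i j = \<mu>"
    using n0 by (simp add: lam1_def \<mu>_def mult.commute)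
  have si: "sigma n i > 0" and sj: "sigma n j > 0" using sigma_pos[OF n0] by auto
  have F3': "tau n q * dc q c = sigma n q * bt q c" if "c \<le> n" for q c
    using F3[OF n that, of q] by (simp add: bt_def dc_def)
  have e1: "mmul (n + 1) (U1 n i j) (Abar n) r c - mmul n (mmul (n + 1) (Bbar n) (V1 n i j)) (Bbar n) r c
      = (1 / real n)\<^sup>2 / 6 * lam1 n i j * mmul (n + 1) (U1 n i j) (Dbar n) r c"
    if r: "r < n" and c: "c < n + 1" for r c
  proof -
    have c': "c \<le> n" using c by simp
    have "mmul (n + 1) (U1 n i j) (Abar n) r c = (tau n j * sigma n i) * (sbar n i r * (tau n j * bt j c))"
      unfolding U1_eq mm_outer_left using F2[OF n c', of j] by (simp add: outer_def bt_def)
    moreover have "mmul n (mmul (n + 1) (Bbar n) (V1 n i j)) (Bbar n) r c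
        = (- tau n i * sigma n j) * ((tau n i * sbar n i r) * bt j c)"
      unfolding V1_eq mm_outer_left mm_outer_right using F1[OF n0 r, of i] by (simp add: outer_def bt_def)
    moreover have "mmul (n + 1) (U1 n i j) (Dbar n) r c = (tau n j * sigma n i) * (sbar n i r * dc j c)"
      unfolding U1_eq mm_outer_left by (simp add: outer_def dc_def)
    ultimately show ?thesis unfolding hl \<mu>_def
      using alg_eq1[OF si sj F3'[OF c']] by simp
  qed
  have e2: "- mmul (n + 1) (mmul n (mtr (Bbar n)) (U1 n i j)) (mtr (Bbar n)) r c + mmul (n + 1) (Abar n) (V1 n i j) r c
      = (1 / real n)\<^sup>2 / 6 * lam1 n i j * mmul (n + 1) (Dbar n) (V1 n i j) r c"
    if r: "r < n + 1" and c: "c < n" for r c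
  proof -
    have r': "r \<le> n" using r by simp
    have "mmul (n + 1) (mmul n (mtr (Bbar n)) (U1 n i j)) (mtr (Bbar n)) r c
        = (tau n j * sigma n i) * (bt i r * (tau n j * sbar n j c))"
      unfolding U1_eq mm_outer_left mm_outer_right BTr using F1t[OF n0 c, of j] by (simp add: outer_def bt_def)
    moreover have "mmul (n + 1) (Abar n) (V1 n i j) r c = (- tau n i * sigma n j) * ((tau n i * bt i r) * sbar n j c)"
      unfolding V1_eq mm_outer_right using F2r[OF n r', of i] by (simp add: outer_def bt_def)
    moreover have "mmul (n + 1) (Dbar n) (V1 n i j) r c = (- tau n i * sigma n j) * (dc i r * sbar n j c)"
      unfolding V1_eq mm_outer_right Dr by (simp add: outer_def dc_def)
    ultimately show ?thesis unfolding hl \<mu>_def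
      using alg_eq2[OF si sj F3'[OF r']] by simp
  qed
  have nz: "mnz n (n + 1) (U1 n i j)"
  proof -
    have "U1 n i j 0 0 \<noteq> 0"
      using tau_nz[OF j] sbar0_nz[OF i] ctil0_nz[of n j] si by (simp add: U1_def outer_def)
    then show ?thesis unfolding mnz_def using n0 by blast
  qed
  have df: "div_free n (U1 n i j) (V1 n i j)"
    unfolding div_free_def meq_def
  proof (intro allI impI)
    fix r c assume r: "r < n + 1" and c: "c < n + 1"
    have r': "r \<le> n" and c': "c \<le> n" using r c by simp_all
    have "mmul (n + 1) (mmul n (mtr (Bbar n)) (U1 n i j)) (Dbar n) r c = (tau n j * sigma n i) * (bt i r * dc j c)"
      unfolding U1_eq mm_outer_left mm_outer_right BTr by (simp add: outer_def bt_def dc_def)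
    moreover have "mmul n (mmul (n + 1) (Dbar n) (V1 n i j)) (Bbar n) r c = (- tau n i * sigma n j) * (dc i r * bt j c)"
      unfolding V1_eq mm_outer_left mm_outer_right Dr by (simp add: outer_def bt_def dc_def)
    ultimately show "mmul (n + 1) (mmul n (mtr (Bbar n)) (U1 n i j)) (Dbar n) r c +
           mmul n (mmul (n + 1) (Dbar n) (V1 n i j)) (Bbar n) r c = 0"
      using alg_div[OF F3'[OF r', symmetric] F3'[OF c', symmetric]] by simp
  qed
  show ?thesis
    unfolding is_eigensol_def Let_def meq_def using e1 e2 nz df by blast
qed

lemma fam0:
  assumes n: "1 \<le> n" and i: "i \<le> n" and j: "j \<le> n" and ij: "(i, j) \<noteq> (0, 0)"
  shows "is_eigensol n 0 (U0 n i j) (V0 n i j)"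
proof -
  have n0: "0 < n" using n by simp
  define bt where "bt q c = (\<Sum>k<n. sbar n q k * Bbar n k c)" for q c
  have e1: "mmul (n + 1) (U0 n i j) (Abar n) r c - mmul n (mmul (n + 1) (Bbar n) (V0 n i j)) (Bbar n) r c
      = (1 / real n)\<^sup>2 / 6 * 0 * mmul (n + 1) (U0 n i j) (Dbar n) r c"
    if r: "r < n" and c: "c < n + 1" for r c
  proof -
    have c': "c \<le> n" using c by simp
    have "mmul (n + 1) (U0 n i j) (Abar n) r c = tau n i * (sbar n i r * (tau n j * bt j c))"
      unfolding U0_eq mm_outer_left using F2[OF n c', of j] by (simp add: outer_def bt_def)
    moreover have "mmul n (mmul (n + 1) (Bbar n) (V0 n i j)) (Bbar n) r c
        = tau n j * ((tau n i * sbar n i r) * bt j c)"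
      unfolding V0_eq mm_outer_left mm_outer_right using F1[OF n0 r, of i] by (simp add: outer_def bt_def)
    ultimately show ?thesis by (simp add: algebra_simps)
  qed
  have e2: "- mmul (n + 1) (mmul n (mtr (Bbar n)) (U0 n i j)) (mtr (Bbar n)) r c + mmul (n + 1) (Abar n) (V0 n i j) r c
      = (1 / real n)\<^sup>2 / 6 * 0 * mmul (n + 1) (Dbar n) (V0 n i j) r c"
    if r: "r < n + 1" and c: "c < n" for r c
  proof -
    have r': "r \<le> n" using r by simp
    have "mmul (n + 1) (mmul n (mtr (Bbar n)) (U0 n i j)) (mtr (Bbar n)) r c
        = tau n i * (bt i r * (tau n j * sbar n j c))"
      unfolding U0_eq mm_outer_left mm_outer_right BTr using F1t[OF n0 c, of j] by (simp add: outer_def bt_def)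
    moreover have "mmul (n + 1) (Abar n) (V0 n i j) r c = tau n j * ((tau n i * bt i r) * sbar n j c)"
      unfolding V0_eq mm_outer_right using F2r[OF n r', of i] by (simp add: outer_def bt_def)
    ultimately show ?thesis by (simp add: algebra_simps)
  qed
  have nz: "mnz n (n + 1) (U0 n i j) \<or> mnz (n + 1) n (V0 n i j)"
  proof (cases "1 \<le> i")
    case True
    have "U0 n i j 0 0 \<noteq> 0"
      using tau_nz[OF True i] sbar0_nz[OF True i] ctil0_nz[of n j] by (simp add: U0_def outer_def)
    then show ?thesis unfolding mnz_def using n0 by blast
  next
    case False
    then have j1: "1 \<le> j" using ij by (cases j) auto
    have "V0 n i j 0 0 \<noteq> 0"
      using tau_nz[OF j1 j] sbar0_nz[OF j1 j] ctil0_nz[of n i] by (simp add: V0_def outer_def)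
    then show ?thesis unfolding mnz_def using n0 by blast
  qed
  show ?thesis
    unfolding is_eigensol_def Let_def meq_def using e1 e2 nz by blast
qed

definition coefU :: "nat \<Rightarrow> (nat \<times> nat \<Rightarrow> real) \<Rightarrow> (nat \<times> nat \<Rightarrow> real) \<Rightarrow> nat \<times> nat \<Rightarrow> real" where
  "coefU n a b p = (if p \<in> I1 n then a p * (tau n (snd p) * sigma n (fst p)) else 0)
     + (if p \<in> I0 n then b p * tau n (fst p) else 0)"

definition coefV :: "nat \<Rightarrow> (nat \<times> nat \<Rightarrow> real) \<Rightarrow> (nat \<times> nat \<Rightarrow> real) \<Rightarrow> nat \<times> nat \<Rightarrow> real" where
  "coefV n a b p = (if p \<in> I1 n then a p * (- tau n (fst p) * sigma n (snd p)) else 0)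
     + (if p \<in> I0 n then b p * tau n (snd p) else 0)"

lemma I1_sub: "I1 n \<subseteq> {0..n}\<times>{0..n}" by (auto simp: I1_def)
lemma I0_sub: "I0 n \<subseteq> {0..n}\<times>{0..n}" by (auto simp: I0_def)

lemma sum_sub_G:
  assumes "A \<subseteq> {0..(n::nat)}\<times>{0..n}"
  shows "(\<Sum>p\<in>A. f p) = (\<Sum>p\<in>{0..n}\<times>{0..n}. if p \<in> A then f p else 0)"
proof -
  have "(\<Sum>p\<in>{0..n}\<times>{0..n}. if p \<in> A then f p else 0) = (\<Sum>p\<in>({0..n}\<times>{0..n}) \<inter> A. f p)"
    by (rule sum.inter_restrict[symmetric]) simp
  also have "({0..n}\<times>{0..n}) \<inter> A = A" using assms by blast
  finally show ?thesis by simp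
qed

lemma sumU:
  "(\<Sum>p\<in>I1 n. a p * U1 n (fst p) (snd p) r c) + (\<Sum>p\<in>I0 n. b p * U0 n (fst p) (snd p) r c)
   = (\<Sum>p\<in>{0..n}\<times>{0..n}. coefU n a b p * (sbar n (fst p) r * ctil n (snd p) c))"
  unfolding sum_sub_G[OF I1_sub] sum_sub_G[OF I0_sub] sum.distrib[symmetric]
  by (rule sum.cong) (auto simp: coefU_def U1_def U0_def outer_def algebra_simps)

lemma sumV:
  "(\<Sum>p\<in>I1 n. a p * V1 n (fst p) (snd p) r c) + (\<Sum>p\<in>I0 n. b p * V0 n (fst p) (snd p) r c)
   = (\<Sum>p\<in>{0..n}\<times>{0..n}. coefV n a b p * (ctil n (fst p) r * sbar n (snd p) c))"
  unfolding sum_sub_G[OF I1_sub] sum_sub_G[OF I0_sub] sum.distrib[symmetric]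
  by (rule sum.cong) (auto simp: coefV_def V1_def V0_def outer_def algebra_simps)

lemma alg_uniq:
  fixes x y ti tj si sj :: real
  assumes ti: "ti \<noteq> 0" and tj: "tj \<noteq> 0" and si: "si > 0" and sj: "sj > 0"
    and h1: "x * (tj * si) + y * ti = 0" and h2: "x * (- ti * sj) + y * tj = 0"
  shows "x = 0 \<and> y = 0"
proof -
  have "x * (tj\<^sup>2 * si + ti\<^sup>2 * sj) = tj * (x * (tj * si) + y * ti) - ti * (x * (- ti * sj) + y * tj)"
    by (simp add: algebra_simps power2_eq_square)
  also have "\<dots> = 0" using h1 h2 by simp
  finally have "x * (tj\<^sup>2 * si + ti\<^sup>2 * sj) = 0" .
  moreover have "tj\<^sup>2 * si + ti\<^sup>2 * sj > 0"
    using ti tj si sj by (simp add: add_pos_pos)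
  ultimately have x: "x = 0" by simp
  then show ?thesis using h1 ti by simp
qed

lemma alg_solve:
  fixes al be ti tj si sj :: real
  assumes ti: "ti \<noteq> 0" and tj: "tj \<noteq> 0" and si: "si > 0" and sj: "sj > 0"
  defines "D \<equiv> tj\<^sup>2 * si + ti\<^sup>2 * sj"
  shows "((al * tj - be * ti) / D) * (tj * si) + ((al * ti * sj + be * tj * si) / D) * ti = al"
    and "((al * tj - be * ti) / D) * (- ti * sj) + ((al * ti * sj + be * tj * si) / D) * tj = be"
proof -
  have D: "D > 0" unfolding D_def using ti tj si sj by (simp add: add_pos_pos)
  have n1: "(al * tj - be * ti) * (tj * si) + (al * ti * sj + be * tj * si) * ti = al * D"
    unfolding D_def by (simp add: algebra_simps power2_eq_square)
  have n2: "(al * tj - be * ti) * (- ti * sj) + (al * ti * sj + be * tj * si) * tj = be * D"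
    unfolding D_def by (simp add: algebra_simps power2_eq_square)
  have "((al * tj - be * ti) / D) * (tj * si) + ((al * ti * sj + be * tj * si) / D) * ti
      = ((al * tj - be * ti) * (tj * si) + (al * ti * sj + be * tj * si) * ti) / D"
    using D by (simp add: field_simps)
  then show "((al * tj - be * ti) / D) * (tj * si) + ((al * ti * sj + be * tj * si) / D) * ti = al"
    using D n1 by simp
  have "((al * tj - be * ti) / D) * (- ti * sj) + ((al * ti * sj + be * tj * si) / D) * tj
      = ((al * tj - be * ti) * (- ti * sj) + (al * ti * sj + be * tj * si) * tj) / D"
    using D by (simp add: field_simps)
  then show "((al * tj - be * ti) / D) * (- ti * sj) + ((al * ti * sj + be * tj * si) / D) * tj = be"
    using D n2 by simp
qed

lemma indep:
  assumes n: "1 \<le> n"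
    and HU: "\<forall>r<n. \<forall>c<n + 1.
             (\<Sum>p\<in>I1 n. a p * U1 n (fst p) (snd p) r c)
           + (\<Sum>p\<in>I0 n. b p * U0 n (fst p) (snd p) r c) = 0"
    and HV: "\<forall>r<n + 1. \<forall>c<n.
             (\<Sum>p\<in>I1 n. a p * V1 n (fst p) (snd p) r c)
           + (\<Sum>p\<in>I0 n. b p * V0 n (fst p) (snd p) r c) = 0"
  shows "(\<forall>p\<in>I1 n. a p = 0) \<and> (\<forall>p\<in>I0 n. b p = 0)"
proof -
  have n0: "0 < n" using n by simp
  have HU': "\<forall>r<n. \<forall>c<n+1. (\<Sum>p\<in>{0..n}\<times>{0..n}. coefU n a b p * (sbar n (fst p) r * ctil n (snd p) c)) = 0"
    using HU unfolding sumU by simp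
  have HV': "\<forall>r<n+1. \<forall>c<n. (\<Sum>p\<in>{0..n}\<times>{0..n}. coefV n a b p * (ctil n (fst p) r * sbar n (snd p) c)) = 0"
    using HV unfolding sumV by simp
  have cu: "coefU n a b (k,l) = 0" if "1 \<le> k" "k \<le> n" "l \<le> n" for k l
    using UB_indep[OF n0 HU' that] .
  have cv: "coefV n a b (l,k) = 0" if "1 \<le> k" "k \<le> n" "l \<le> n" for k l
    using VB_indep[OF n0 HV' that] .
  have A: "a (i,j) = 0 \<and> b (i,j) = 0" if "(i,j) \<in> I1 n" for i j
  proof -
    have ij: "1 \<le> i" "i \<le> n" "1 \<le> j" "j \<le> n" using that by (auto simp: I1_def)
    have in0: "(i,j) \<in> I0 n" using ij by (auto simp: I0_def)
    have h1: "a (i,j) * (tau n j * sigma n i) + b (i,j) * tau n i = 0"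
      using cu[of i j] ij that in0 by (simp add: coefU_def)
    have h2: "a (i,j) * (- tau n i * sigma n j) + b (i,j) * tau n j = 0"
      using cv[of j i] ij that in0 by (simp add: coefV_def)
    show ?thesis
      using alg_uniq[OF tau_nz[of i n] tau_nz[of j n] sigma_pos[OF n0] sigma_pos[OF n0] h1 h2] ij by simp
  qed
  have B: "b (i,j) = 0" if "(i,j) \<in> I0 n" for i j
  proof -
    have ij: "i \<le> n" "j \<le> n" "(i,j) \<noteq> (0,0)" using that by (auto simp: I0_def)
    show ?thesis
    proof (cases "1 \<le> i \<and> 1 \<le> j")
      case True
      then have "(i,j) \<in> I1 n" using ij by (auto simp: I1_def)
      then show ?thesis using A by blast
    next
      case False
      show ?thesis
      proof (cases "j = 0")
        case True
        then have i1: "1 \<le> i" using ij by (cases i) auto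
        have "(i,j) \<notin> I1 n" using True by (auto simp: I1_def)
        then have "b (i,j) * tau n i = 0" using cu[of i j] i1 ij that by (simp add: coefU_def)
        then show ?thesis using tau_nz[OF i1 ij(1)] by simp
      next
        case F2: False
        then have j1: "1 \<le> j" by simp
        then have i0: "i = 0" using False by simp
        have "(i,j) \<notin> I1 n" using i0 by (auto simp: I1_def)
        then have "b (i,j) * tau n j = 0" using cv[of j i] j1 ij that by (simp add: coefV_def)
        then show ?thesis using tau_nz[OF j1 ij(2)] by simp
      qed
    qed
  qed
  show ?thesis using A B by auto
qed

lemma span:
  assumes n: "1 \<le> n"
  shows "\<exists>a b :: nat \<times> nat \<Rightarrow> real.
         (\<forall>r<n. \<forall>c<n + 1.
             X r c = (\<Sum>p\<in>I1 n. a p * U1 n (fst p) (snd p) r c)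
                   + (\<Sum>p\<in>I0 n. b p * U0 n (fst p) (snd p) r c))
       \<and> (\<forall>r<n + 1. \<forall>c<n.
             Y r c = (\<Sum>p\<in>I1 n. a p * V1 n (fst p) (snd p) r c)
                   + (\<Sum>p\<in>I0 n. b p * V0 n (fst p) (snd p) r c))"
proof -
  have n0: "0 < n" using n by simp
  obtain \<alpha> where HA: "\<forall>r'<n. \<forall>c'<n+1. X r' c' = (\<Sum>p\<in>{0..n}\<times>{0..n}. \<alpha> p * (sbar n (fst p) r' * ctil n (snd p) c'))"
    using UB_span[OF n0, of X] by blast
  obtain \<beta> where HB: "\<forall>r'<n+1. \<forall>c'<n. Y r' c' = (\<Sum>p\<in>{0..n}\<times>{0..n}. \<beta> p * (ctil n (fst p) r' * sbar n (snd p) c'))"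
    using VB_span[OF n0, of Y] by blast
  define D where "D p = (tau n (snd p))\<^sup>2 * sigma n (fst p) + (tau n (fst p))\<^sup>2 * sigma n (snd p)" for p
  define a where "a p = (\<alpha> p * tau n (snd p) - \<beta> p * tau n (fst p)) / D p" for p
  define b where "b p = (if 1 \<le> fst p \<and> 1 \<le> snd p then
       (\<alpha> p * tau n (fst p) * sigma n (snd p) + \<beta> p * tau n (snd p) * sigma n (fst p)) / D p
     else if snd p = 0 then \<alpha> p / tau n (fst p) else \<beta> p / tau n (snd p))" for p
  have cu: "coefU n a b p * (sbar n (fst p) r * ctil n (snd p) c) = \<alpha> p * (sbar n (fst p) r * ctil n (snd p) c)"
    if p: "p \<in> {0..n}\<times>{0..n}" for p r c
  proof -
    obtain i j where pij: "p = (i,j)" by (cases p)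
    have ij: "i \<le> n" "j \<le> n" using p pij by auto
    show ?thesis
    proof (cases "i = 0")
      case True then show ?thesis using pij by (simp add: sbar0)
    next
      case False
      then have i1: "1 \<le> i" by simp
      have "coefU n a b (i,j) = \<alpha> (i,j)"
      proof (cases "j = 0")
        case True
        have "(i,j) \<notin> I1 n" "(i,j) \<in> I0 n" using True ij i1 by (auto simp: I1_def I0_def)
        then show ?thesis using True i1 tau_nz[OF i1 ij(1)] by (simp add: coefU_def b_def)
      next
        case F2: False
        then have j1: "1 \<le> j" by simp
        have "(i,j) \<in> I1 n" "(i,j) \<in> I0 n" using j1 ij i1 by (auto simp: I1_def I0_def)
        then show ?thesis using i1 j1
          alg_solve(1)[OF tau_nz[OF i1 ij(1)] tau_nz[OF j1 ij(2)] sigma_pos[OF n0] sigma_pos[OF n0], of "\<alpha> (i,j)" "\<beta> (i,j)"]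
          by (simp add: coefU_def a_def b_def D_def)
      qed
      then show ?thesis using pij by simp
    qed
  qed
  have cv: "coefV n a b p * (ctil n (fst p) r * sbar n (snd p) c) = \<beta> p * (ctil n (fst p) r * sbar n (snd p) c)"
    if p: "p \<in> {0..n}\<times>{0..n}" for p r c
  proof -
    obtain i j where pij: "p = (i,j)" by (cases p)
    have ij: "i \<le> n" "j \<le> n" using p pij by auto
    show ?thesis
    proof (cases "j = 0")
      case True then show ?thesis using pij by (simp add: sbar0)
    next
      case False
      then have j1: "1 \<le> j" by simp
      have "coefV n a b (i,j) = \<beta> (i,j)"
      proof (cases "i = 0")
        case True
        have "(i,j) \<notin> I1 n" "(i,j) \<in> I0 n" using True ij j1 by (auto simp: I1_def I0_def)
        then show ?thesis using True j1 tau_nz[OF j1 ij(2)] by (simp add: coefV_def b_def)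
      next
        case F2: False
        then have i1: "1 \<le> i" by simp
        have "(i,j) \<in> I1 n" "(i,j) \<in> I0 n" using j1 ij i1 by (auto simp: I1_def I0_def)
        then show ?thesis using i1 j1
          alg_solve(2)[OF tau_nz[OF i1 ij(1)] tau_nz[OF j1 ij(2)] sigma_pos[OF n0] sigma_pos[OF n0], of "\<alpha> (i,j)" "\<beta> (i,j)"]
          by (simp add: coefV_def a_def b_def D_def)
      qed
      then show ?thesis using pij by simp
    qed
  qed
  have "X r c = (\<Sum>p\<in>I1 n. a p * U1 n (fst p) (snd p) r c) + (\<Sum>p\<in>I0 n. b p * U0 n (fst p) (snd p) r c)"
    if "r < n" "c < n + 1" for r c
  proof -
    have "X r c = (\<Sum>p\<in>{0..n}\<times>{0..n}. \<alpha> p * (sbar n (fst p) r * ctil n (snd p) c))"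
      using HA that by simp
    also have "\<dots> = (\<Sum>p\<in>{0..n}\<times>{0..n}. coefU n a b p * (sbar n (fst p) r * ctil n (snd p) c))"
      by (rule sum.cong[OF refl]) (rule cu[symmetric])
    finally show ?thesis unfolding sumU .
  qed
  moreover have "Y r c = (\<Sum>p\<in>I1 n. a p * V1 n (fst p) (snd p) r c) + (\<Sum>p\<in>I0 n. b p * V0 n (fst p) (snd p) r c)"
    if "r < n + 1" "c < n" for r c
  proof -
    have "Y r c = (\<Sum>p\<in>{0..n}\<times>{0..n}. \<beta> p * (ctil n (fst p) r * sbar n (snd p) c))"
      using HB that by simp
    also have "\<dots> = (\<Sum>p\<in>{0..n}\<times>{0..n}. coefV n a b p * (ctil n (fst p) r * sbar n (snd p) c))"
      by (rule sum.cong[OF refl]) (rule cv[symmetric])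
    finally show ?thesis unfolding sumV .
  qed
  ultimately show ?thesis by blast
qed

theorem theorem5p1:
  fixes n :: nat
  assumes "n \<ge> 1"
  shows "card (I1 n) + card (I0 n) = 2 * n * (n + 1)
    \<and> (\<forall>(i, j) \<in> I1 n.
         is_eigensol n (lam1 n i j) (U1 n i j) (V1 n i j) \<and> div_free n (U1 n i j) (V1 n i j))
    \<and> (\<forall>(i, j) \<in> I0 n. is_eigensol n 0 (U0 n i j) (V0 n i j))
    \<and> (\<forall>a b :: nat \<times> nat \<Rightarrow> real.
         ((\<forall>r<n. \<forall>c<n + 1.
             (\<Sum>p\<in>I1 n. a p * U1 n (fst p) (snd p) r c)
           + (\<Sum>p\<in>I0 n. b p * U0 n (fst p) (snd p) r c) = 0)
        \<and> (\<forall>r<n + 1. \<forall>c<n.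
             (\<Sum>p\<in>I1 n. a p * V1 n (fst p) (snd p) r c)
           + (\<Sum>p\<in>I0 n. b p * V0 n (fst p) (snd p) r c) = 0))
        \<longrightarrow> (\<forall>p\<in>I1 n. a p = 0) \<and> (\<forall>p\<in>I0 n. b p = 0))
    \<and> (\<forall>X Y :: nat \<Rightarrow> nat \<Rightarrow> real. \<exists>a b :: nat \<times> nat \<Rightarrow> real.
         (\<forall>r<n. \<forall>c<n + 1.
             X r c = (\<Sum>p\<in>I1 n. a p * U1 n (fst p) (snd p) r c)
                   + (\<Sum>p\<in>I0 n. b p * U0 n (fst p) (snd p) r c))
       \<and> (\<forall>r<n + 1. \<forall>c<n.
             Y r c = (\<Sum>p\<in>I1 n. a p * V1 n (fst p) (snd p) r c)
                   + (\<Sum>p\<in>I0 n. b p * V0 n (fst p) (snd p) r c)))"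
proof -
  have n: "1 \<le> n" using assms .
  have c1: "card (I1 n) = n * n" by (simp add: I1_def card_cartesian_product)
  have c0: "card (I0 n) = (n+1) * (n+1) - 1" by (simp add: I0_def card_cartesian_product)
  have card: "card (I1 n) + card (I0 n) = 2 * n * (n + 1)"
    unfolding c1 c0 by (simp add: algebra_simps)
  have f1: "\<forall>(i, j) \<in> I1 n. is_eigensol n (lam1 n i j) (U1 n i j) (V1 n i j) \<and> div_free n (U1 n i j) (V1 n i j)"
    using fam1[OF n] by (auto simp: I1_def)
  have f0: "\<forall>(i, j) \<in> I0 n. is_eigensol n 0 (U0 n i j) (V0 n i j)"
  proof
    fix p assume p: "p \<in> I0 n"
    obtain i j where pij: "p = (i,j)" by (cases p)
    have "i \<le> n" "j \<le> n" "(i,j) \<noteq> (0,0)" using p pij by (auto simp: I0_def)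
    then have "is_eigensol n 0 (U0 n i j) (V0 n i j)" by (rule fam0[OF n])
    then show "case p of (i, j) \<Rightarrow> is_eigensol n 0 (U0 n i j) (V0 n i j)" using pij by simp
  qed
  show ?thesis using card f1 f0 indep[OF n] span[OF n] by blast
qed


end
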